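(* For every $n\ge0$ there exists a bijection between the set of relaxed binary trees of size $n$ and the set $\mathcal{D}_n$ of horizontally decorated Dyck paths of length $2n$.
   Context: A (rooted, plane) binary tree is either a leaf or an internal node with an ordered pair of binary subtrees; its size is its number of internal nodes; postorder visits left subtree, right subtree, then root. A relaxed binary tree of size $n$ is obtained from a binary tree $T$ with $n$ internal nodes (its spine) by keeping the left-most leaf and turning every other leaf $\ell$ into a pointer to a vertex of $T$ which is an internal node or the left-most leaf and which precedes $\ell$ in postorder; two relaxed trees are equal iff they have the same spine and the same pointer targets. A horizontally decorated path is a lattice path starting at $(0,0)$ with steps $H=(1,0)$ and $V=(0,1)$ confined to the region $0\le y\le x$, in which each $H$ step is decorated by a number in $\{1,\dots,k+1\}$, where $k$ is the $y$-coordinate of that step. It is a horizontally decorated Dyck path (of length $2n$) if it ends at $(n,n)$; $\mathcal{D}_n$ denotes the set of these. *)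

theory Defs
  imports Main
begin

datatype bt = Leaf | Node bt bt

fun isize :: "bt \<Rightarrow> nat" where
  "isize Leaf = 0"
| "isize (Node l r) = Suc (isize l + isize r)"

text \<open>Vertices are addressed by their path from the root (False = left child, True = right child).\<close>
fun leaves :: "bt \<Rightarrow> bool list set" where
  "leaves Leaf = {[]}"
| "leaves (Node l r) = Cons False ` leaves l \<union> Cons True ` leaves r"

fun internals :: "bt \<Rightarrow> bool list set" where
  "internals Leaf = {}"
| "internals (Node l r) = insert [] (Cons False ` internals l \<union> Cons True ` internals r)"

fun lml :: "bt \<Rightarrow> bool list" where
  "lml Leaf = []"
| "lml (Node l r) = False # lml l"

fun post :: "bt \<Rightarrow> bool list list" where
  "post Leaf = [[]]"
| "post (Node l r) = map (Cons False) (post l) @ map (Cons True) (post r) @ [[]]"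

definition precedes :: "bt \<Rightarrow> bool list \<Rightarrow> bool list \<Rightarrow> bool" where
  "precedes T u v \<longleftrightarrow> (\<exists>i j. i < j \<and> j < length (post T) \<and> post T ! i = u \<and> post T ! j = v)"

text \<open>The pointer map sends each
  non-left-most leaf to its target vertex; it is fixed to [] outside this domain
  so that two relaxed trees are equal iff same spine and same pointer targets.\<close>
definition relaxed_trees :: "nat \<Rightarrow> (bt \<times> (bool list \<Rightarrow> bool list)) set" where
  "relaxed_trees n = {(T, f). isize T = n \<and>
     (\<forall>lf \<in> leaves T - {lml T}. (f lf \<in> internals T \<or> f lf = lml T) \<and> precedes T (f lf) lf) \<and>
     (\<forall>x. x \<notin> leaves T - {lml T} \<longrightarrow> f x = [])}"

datatype step = H nat | V

fun valid_from :: "nat \<Rightarrow> nat \<Rightarrow> step list \<Rightarrow> bool" where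
  "valid_from x y [] = True"
| "valid_from x y (H d # p) = (1 \<le> d \<and> d \<le> y + 1 \<and> valid_from (Suc x) y p)"
| "valid_from x y (V # p) = (Suc y \<le> x \<and> valid_from x (Suc y) p)"

fun endpoint :: "step list \<Rightarrow> nat \<times> nat" where
  "endpoint [] = (0, 0)"
| "endpoint (H d # p) = (case endpoint p of (x, y) \<Rightarrow> (Suc x, y))"
| "endpoint (V # p) = (case endpoint p of (x, y) \<Rightarrow> (x, Suc y))"

definition dyck_paths :: "nat \<Rightarrow> step list set" where
  "dyck_paths n = {p. valid_from 0 0 p \<and> endpoint p = (n, n)}"

end

theory Submission
  imports Defs
begin
datatype dt = DLeaf nat | DNode dt dt

fun encAll :: "dt \<Rightarrow> step list" where
  "encAll (DLeaf d) = [H d]"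
| "encAll (DNode l r) = encAll l @ encAll r @ [V]"

fun dsize :: "dt \<Rightarrow> nat" where
  "dsize (DLeaf d) = 0"
| "dsize (DNode l r) = Suc (dsize l + dsize r)"

fun run :: "dt list \<Rightarrow> step list \<Rightarrow> dt list option" where
  "run s [] = Some s"
| "run s (H d # p) = run (DLeaf d # s) p"
| "run (r # l # s) (V # p) = run (DNode l r # s) p"
| "run _ (V # p) = None"

fun dec_ok :: "nat \<Rightarrow> step list \<Rightarrow> bool" where
  "dec_ok y [] = True"
| "dec_ok y (H d # p) = (1 \<le> d \<and> d \<le> y + 1 \<and> dec_ok y p)"
| "dec_ok y (V # p) = dec_ok (Suc y) p"

fun nH :: "step list \<Rightarrow> nat" where
  "nH [] = 0" | "nH (H d # p) = Suc (nH p)" | "nH (V # p) = nH p"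
fun nV :: "step list \<Rightarrow> nat" where
  "nV [] = 0" | "nV (H d # p) = nV p" | "nV (V # p) = Suc (nV p)"

lemma nH_app[simp]: "nH (p @ q) = nH p + nH q"
  by (induction p rule: nH.induct) auto
lemma nV_app[simp]: "nV (p @ q) = nV p + nV q"
  by (induction p rule: nV.induct) auto
lemma endpoint_n: "endpoint p = (nH p, nV p)"
  by (induction p rule: nH.induct) auto
lemma dec_ok_app: "dec_ok y (p @ q) = (dec_ok y p \<and> dec_ok (y + nV p) q)"
  by (induction y p rule: dec_ok.induct) auto
lemma nV_enc[simp]: "nV (encAll t) = dsize t"
  by (induction t) auto
lemma nH_enc[simp]: "nH (encAll t) = Suc (dsize t)"
  by (induction t) auto
lemma enc_hd: "\<exists>d q. encAll t = H d # q"
  by (induction t) auto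

lemma run_enc: "run s (encAll t @ p) = run (t # s) p"
  by (induction t arbitrary: s p) auto

lemma run_complete: "run s p = Some [t] \<Longrightarrow> concat (map encAll (rev s)) @ p = encAll t"
  by (induction s p rule: run.induct) auto

lemma run_len: "run s p = Some s' \<Longrightarrow> length s' + nV p = length s + nH p"
  by (induction s p rule: run.induct) auto

lemma valid_run: "y \<le> x \<Longrightarrow> length s = Suc (x - y) \<Longrightarrow> valid_from x y p = (dec_ok y p \<and> run s p \<noteq> None)"
proof (induction s p arbitrary: x y rule: run.induct)
  case (3 r l s p)
  then show ?case by (auto simp: Suc_le_eq)
qed auto

theorem step2: "bij_betw (\<lambda>t. tl (encAll t)) {t. dsize t = n \<and> dec_ok 0 (encAll t)} (dyck_paths n)"
proof -
  have start: "encAll t = H 1 # tl (encAll t) \<and> dec_ok 0 (tl (encAll t))" if "dec_ok 0 (encAll t)" for t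
    using enc_hd[of t] that by auto
  show ?thesis
  proof (rule bij_betw_imageI)
    show "inj_on (\<lambda>t. tl (encAll t)) {t. dsize t = n \<and> dec_ok 0 (encAll t)}"
    proof (rule inj_onI)
      fix t1 t2 assume a: "t1 \<in> {t. dsize t = n \<and> dec_ok 0 (encAll t)}" "t2 \<in> {t. dsize t = n \<and> dec_ok 0 (encAll t)}"
        "tl (encAll t1) = tl (encAll t2)"
      then have "encAll t1 = encAll t2" using start by (metis mem_Collect_eq)
      then have "run [] (encAll t1 @ []) = run [] (encAll t2 @ [])" by simp
      then show "t1 = t2" by (simp only: run_enc) simp
    qed
    show "(\<lambda>t. tl (encAll t)) ` {t. dsize t = n \<and> dec_ok 0 (encAll t)} = dyck_paths n"
    proof
      show "(\<lambda>t. tl (encAll t)) ` {t. dsize t = n \<and> dec_ok 0 (encAll t)} \<subseteq> dyck_paths n"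
      proof clarify
        fix t assume "dec_ok 0 (encAll t)" "n = dsize t"
        then have s: "encAll t = H 1 # tl (encAll t)" "dec_ok 0 (tl (encAll t))" using start by auto
        have "run [DLeaf 1] (tl (encAll t)) = run [] (encAll t @ [])"
          using s(1) by (metis append_Nil2 run.simps(2))
        also have "\<dots> = Some [t]" by (simp only: run_enc) simp
        finally have "valid_from 0 0 (tl (encAll t))" using valid_run[of 0 0 "[DLeaf 1]"] s by auto
        moreover have "nH (tl (encAll t)) = dsize t" "nV (tl (encAll t)) = dsize t"
          using s(1) nH_enc[of t] nV_enc[of t] by (metis nH.simps(2) old.nat.inject, metis nV.simps(2))
        ultimately show "tl (encAll t) \<in> dyck_paths (dsize t)"
          by (simp add: dyck_paths_def endpoint_n)
      qed
      show "dyck_paths n \<subseteq> (\<lambda>t. tl (encAll t)) ` {t. dsize t = n \<and> dec_ok 0 (encAll t)}"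
      proof
        fix p assume "p \<in> dyck_paths n"
        then have v: "valid_from 0 0 p" "nH p = n" "nV p = n" by (auto simp: dyck_paths_def endpoint_n)
        then have d: "dec_ok 0 p" and "run [DLeaf 1] p \<noteq> None" using valid_run[of 0 0 "[DLeaf 1]" p] by auto
        then obtain s' where r: "run [DLeaf 1] p = Some s'" by auto
        then have "length s' = 1" using run_len[OF r] v by simp
        then obtain t where "s' = [t]" by (metis One_nat_def length_0_conv length_Suc_conv)
        then have e: "encAll t = H 1 # p" using run_complete[of "[DLeaf 1]" p t] r by simp
        then have "dsize t = n" using nV_enc[of t] v by simp
        moreover have "dec_ok 0 (encAll t)" using e d by simp
        ultimately show "p \<in> (\<lambda>t. tl (encAll t)) ` {t. dsize t = n \<and> dec_ok 0 (encAll t)}"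
          using e by (metis (mono_tags, lifting) image_eqI list.sel(3) mem_Collect_eq)
      qed
    qed
  qed
qed

fun shape :: "dt \<Rightarrow> bt" where
  "shape (DLeaf d) = Leaf"
| "shape (DNode l r) = Node (shape l) (shape r)"

fun labf :: "dt \<Rightarrow> bool list \<Rightarrow> nat" where
  "labf (DLeaf d) a = d"
| "labf (DNode l r) [] = 0"
| "labf (DNode l r) (False # a) = labf l a"
| "labf (DNode l r) (True # a) = labf r a"

fun lab :: "bt \<Rightarrow> (bool list \<Rightarrow> nat) \<Rightarrow> dt" where
  "lab Leaf g = DLeaf (g [])"
| "lab (Node l r) g = DNode (lab l (g \<circ> Cons False)) (lab r (g \<circ> Cons True))"

lemma shape_lab[simp]: "shape (lab T g) = T"
  by (induction T arbitrary: g) auto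
lemma dsize_lab[simp]: "dsize (lab T g) = isize T"
  by (induction T arbitrary: g) auto
lemma lab_shape: "lab (shape t) (labf t) = t"
proof (induction t)
  case (DNode l r)
  have "labf (DNode l r) \<circ> Cons False = labf l" "labf (DNode l r) \<circ> Cons True = labf r" by auto
  then show ?case using DNode by simp
qed simp
lemma labf_lab: "a \<in> leaves T \<Longrightarrow> labf (lab T g) a = g a"
proof (induction T arbitrary: g a)
  case (Node l r)
  from Node.prems obtain b a' where a: "a = b # a'" "b = False \<Longrightarrow> a' \<in> leaves l" "b = True \<Longrightarrow> a' \<in> leaves r"
    by auto
  show ?case
  proof (cases b)
    case True then show ?thesis using a Node.IH(2)[of a' "g \<circ> Cons True"] by (simp add: comp_def)
  next
    case False then show ?thesis using a Node.IH(1)[of a' "g \<circ> Cons False"] by (simp add: comp_def)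
  qed
qed simp
lemma lab_cong: "(\<And>a. a \<in> leaves T \<Longrightarrow> g a = h a) \<Longrightarrow> lab T g = lab T h"
proof (induction T arbitrary: g h)
  case (Node l r)
  have "lab l (g \<circ> Cons False) = lab l (h \<circ> Cons False)" by (rule Node.IH(1)) (simp add: Node.prems)
  moreover have "lab r (g \<circ> Cons True) = lab r (h \<circ> Cons True)" by (rule Node.IH(2)) (simp add: Node.prems)
  ultimately show ?case by simp
qed simp

lemma post_set: "set (post T) = leaves T \<union> internals T"
  by (induction T) auto
lemma leaves_internals: "leaves T \<inter> internals T = {}"
  by (induction T) auto
lemma post_distinct: "distinct (post T)"
  by (induction T) (auto simp: distinct_map inj_on_def)
lemma post_hd: "\<exists>ys. post T = lml T # ys"
  by (induction T) auto
lemma lml_leaf: "lml T \<in> leaves T"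
  by (induction T) auto

lemma leaves_simps[simp]:
  "(False # a \<in> leaves (Node l r)) = (a \<in> leaves l)"
  "(True # a \<in> leaves (Node l r)) = (a \<in> leaves r)"
  "([] \<notin> leaves (Node l r))"
  by auto

lemma enc_lab: "encAll (lab T g) = map (\<lambda>a. if a \<in> leaves T then H (g a) else V) (post T)"
  by (induction T arbitrary: g) auto

lemma all_less_Suc': "(\<forall>i<Suc n. P i) = (P 0 \<and> (\<forall>i<n. P (Suc i)))"
  using less_Suc_eq_0_disj by auto

lemma dec_ok_map: "dec_ok y (map (\<lambda>a. if P a then H (g a) else V) xs) =
  (\<forall>i<length xs. P (xs!i) \<longrightarrow> 1 \<le> g (xs!i) \<and> g (xs!i) \<le> y + 1 + length (filter (\<lambda>a. \<not> P a) (take i xs)))"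
proof (induction xs arbitrary: y)
  case (Cons x xs)
  show ?case by (simp only: length_Cons all_less_Suc') (auto simp: Cons)
qed simp

lemma aux_take: "j \<le> length xs \<Longrightarrow> (v \<in> set (take j xs)) = (\<exists>i<j. xs!i = v)"
  by (auto simp: in_set_conv_nth)

definition TL :: "bt \<Rightarrow> bool list list" where
  "TL T = filter (\<lambda>v. v \<in> internals T \<or> v = lml T) (post T)"

lemma precedes_nth: "j < length (post T) \<Longrightarrow> precedes T v (post T ! j) = (v \<in> set (take j (post T)))"
proof -
  assume j: "j < length (post T)"
  have d: "distinct (post T)" by (rule post_distinct)
  have "precedes T v (post T ! j) = (\<exists>i<j. post T ! i = v)"
  proof
    assume "precedes T v (post T ! j)"
    then obtain i k where "i < k" "k < length (post T)" "post T ! i = v" "post T ! k = post T ! j"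
      by (auto simp: precedes_def)
    moreover then have "k = j" using d j nth_eq_iff_index_eq by blast
    ultimately show "\<exists>i<j. post T ! i = v" by blast
  next
    assume "\<exists>i<j. post T ! i = v"
    then show "precedes T v (post T ! j)" using j unfolding precedes_def by blast
  qed
  also have "\<dots> = (v \<in> set (take j (post T)))"
    using j aux_take[of j "post T" v] by simp
  finally show ?thesis .
qed

lemma targets:
  assumes xs: "post T = lml T # ys" and j: "j < length ys"
  shows "{v. (v \<in> internals T \<or> v = lml T) \<and> precedes T v (post T ! Suc j)} =
           set (take (Suc (length (filter (\<lambda>a. a \<notin> leaves T) (take (Suc j) (post T))))) (TL T))"
    and "Suc (length (filter (\<lambda>a. a \<notin> leaves T) (take (Suc j) (post T)))) \<le> length (TL T)"
proof -
  define tgt where "tgt = (\<lambda>v. v \<in> internals T \<or> v = lml T)"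
  define F where "F = filter tgt (take (Suc j) (post T))"
  have d: "distinct (lml T # ys)" using post_distinct[of T] xs by simp
  have sy: "set ys \<subseteq> leaves T \<union> internals T" using post_set[of T] xs by auto
  have fc: "filter tgt (take j ys) = filter (\<lambda>a. a \<notin> leaves T) (take j ys)"
  proof (rule filter_cong[OF refl])
    fix a assume "a \<in> set (take j ys)"
    then have "a \<in> set ys" by (meson in_set_takeD)
    then have "a \<noteq> lml T" "a \<in> leaves T \<union> internals T" using d sy by auto
    then show "tgt a = (a \<notin> leaves T)" using leaves_internals[of T] unfolding tgt_def by auto
  qed
  have F: "F = lml T # filter (\<lambda>a. a \<notin> leaves T) (take j ys)"
    unfolding F_def xs using fc by (simp add: tgt_def)
  have c: "length (filter (\<lambda>a. a \<notin> leaves T) (take (Suc j) (post T))) = length (filter (\<lambda>a. a \<notin> leaves T) (take j ys))"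
    using xs lml_leaf[of T] by simp
  have TLs: "TL T = F @ filter tgt (drop (Suc j) (post T))"
    unfolding TL_def F_def tgt_def by (metis append_take_drop_id filter_append)
  have tk: "take (length F) (TL T) = F" using TLs by simp
  have lF: "length F = Suc (length (filter (\<lambda>a. a \<notin> leaves T) (take (Suc j) (post T))))"
    using F c by simp
  show "Suc (length (filter (\<lambda>a. a \<notin> leaves T) (take (Suc j) (post T)))) \<le> length (TL T)"
    using TLs lF by simp
  have "Suc j < length (post T)" using xs j by simp
  then have "{v. tgt v \<and> precedes T v (post T ! Suc j)} = set F"
    unfolding F_def by (auto simp: precedes_nth)
  then show "{v. (v \<in> internals T \<or> v = lml T) \<and> precedes T v (post T ! Suc j)} =
           set (take (Suc (length (filter (\<lambda>a. a \<notin> leaves T) (take (Suc j) (post T))))) (TL T))"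
    using tk lF unfolding tgt_def by simp
qed


lemma nth_in_take: "k < m \<Longrightarrow> m \<le> length xs \<Longrightarrow> xs ! k \<in> set (take m xs)"
proof -
  assume "k < m" "m \<le> length xs"
  then have "k < length (take m xs)" "take m xs ! k = xs ! k" by auto
  then show ?thesis by (metis nth_mem)
qed

lemma dsize_shape: "dsize t = isize (shape t)"
  by (induction t) auto

abbreviation cnt :: "bt \<Rightarrow> nat \<Rightarrow> nat" where
  "cnt T j \<equiv> length (filter (\<lambda>a. a \<notin> leaves T) (take (Suc j) (post T)))"

lemma one_bound: "(Suc 0 \<le> x \<and> x \<le> Suc 0 \<and> P) = (x = Suc 0 \<and> P)" for x :: nat
  by auto

lemma DT_char:
  assumes xs: "post T = lml T # ys"
  shows "dec_ok 0 (encAll (lab T g)) = (g (lml T) = 1 \<and>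
     (\<forall>j<length ys. ys!j \<in> leaves T \<longrightarrow> 1 \<le> g (ys!j) \<and> g (ys!j) \<le> Suc (cnt T j)))"
proof -
  have "dec_ok 0 (encAll (lab T g)) = (\<forall>i<length (post T). post T ! i \<in> leaves T \<longrightarrow>
      1 \<le> g (post T ! i) \<and> g (post T ! i) \<le> 0 + 1 + length (filter (\<lambda>a. a \<notin> leaves T) (take i (post T))))"
    by (simp only: enc_lab dec_ok_map)
  also have "\<dots> = (g (lml T) = 1 \<and>
     (\<forall>j<length ys. ys!j \<in> leaves T \<longrightarrow> 1 \<le> g (ys!j) \<and> g (ys!j) \<le> Suc (cnt T j)))"
    unfolding xs length_Cons all_less_Suc' using lml_leaf[of T] by (simp add: one_bound)
  finally show ?thesis .
qed

lemma leaf_pos: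
  assumes xs: "post T = lml T # ys" and a: "a \<in> leaves T" "a \<noteq> lml T"
  shows "\<exists>j<length ys. ys ! j = a"
proof -
  have "a \<in> set (post T)" using a post_set by auto
  then have "a \<in> set ys" using xs a by simp
  then show ?thesis by (simp add: in_set_conv_nth)
qed

lemma TL_distinct: "distinct (TL T)"
  unfolding TL_def using post_distinct by simp

definition chi :: "dt \<Rightarrow> bt \<times> (bool list \<Rightarrow> bool list)" where
  "chi t = (shape t, \<lambda>a. if a \<in> leaves (shape t) - {lml (shape t)} then TL (shape t) ! (labf t a - 1) else [])"

theorem step1: "bij_betw chi {t. dsize t = n \<and> dec_ok 0 (encAll t)} (relaxed_trees n)"
proof (rule bij_betw_imageI)
  show "inj_on chi {t. dsize t = n \<and> dec_ok 0 (encAll t)}"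
  proof (rule inj_onI)
    fix t1 t2 assume t1: "t1 \<in> {t. dsize t = n \<and> dec_ok 0 (encAll t)}"
      and t2: "t2 \<in> {t. dsize t = n \<and> dec_ok 0 (encAll t)}" and e: "chi t1 = chi t2"
    obtain T where T: "shape t1 = T" by blast
    have sh: "shape t2 = T" using e T by (simp add: chi_def)
    obtain ys where xs: "post T = lml T # ys" using post_hd by blast
    have l1: "t1 = lab T (labf t1)" using lab_shape[of t1] T by simp
    have l2: "t2 = lab T (labf t2)" using lab_shape sh by metis
    have c1: "labf t1 (lml T) = 1 \<and> (\<forall>j<length ys. ys!j \<in> leaves T \<longrightarrow> 1 \<le> labf t1 (ys!j) \<and> labf t1 (ys!j) \<le> Suc (cnt T j))"
      using t1 l1 DT_char[OF xs, of "labf t1"] by simp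
    have c2: "labf t2 (lml T) = 1 \<and> (\<forall>j<length ys. ys!j \<in> leaves T \<longrightarrow> 1 \<le> labf t2 (ys!j) \<and> labf t2 (ys!j) \<le> Suc (cnt T j))"
      using t2 l2 DT_char[OF xs, of "labf t2"] by simp
    have fe: "(\<lambda>a. if a \<in> leaves T - {lml T} then TL T ! (labf t1 a - 1) else []) =
              (\<lambda>a. if a \<in> leaves T - {lml T} then TL T ! (labf t2 a - 1) else [])"
      using e unfolding chi_def sh T by simp
    have "labf t1 a = labf t2 a" if a: "a \<in> leaves T" for a
    proof (cases "a = lml T")
      case True then show ?thesis using c1 c2 by simp
    next
      case False
      then obtain j where j: "j < length ys" "ys ! j = a" using leaf_pos[OF xs a] by blast
      have m: "Suc (cnt T j) \<le> length (TL T)" using targets(2)[OF xs j(1)] .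
      have b1: "1 \<le> labf t1 a" "labf t1 a \<le> Suc (cnt T j)" using c1 j a by auto
      have b2: "1 \<le> labf t2 a" "labf t2 a \<le> Suc (cnt T j)" using c2 j a by auto
      have "TL T ! (labf t1 a - 1) = TL T ! (labf t2 a - 1)" using fun_cong[OF fe, of a] a False by simp
      then have "labf t1 a - 1 = labf t2 a - 1" using TL_distinct[of T] m b1 b2
        by (simp add: nth_eq_iff_index_eq)
      then show ?thesis using b1 b2 by simp
    qed
    then show "t1 = t2" using l1 l2 lab_cong by metis
  qed
  show "chi ` {t. dsize t = n \<and> dec_ok 0 (encAll t)} = relaxed_trees n"
  proof
    show "chi ` {t. dsize t = n \<and> dec_ok 0 (encAll t)} \<subseteq> relaxed_trees n"
    proof
      fix p assume "p \<in> chi ` {t. dsize t = n \<and> dec_ok 0 (encAll t)}"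
      then obtain t where t: "dec_ok 0 (encAll t)" and n: "dsize t = n" and pt: "p = chi t" by blast
      obtain T where T: "shape t = T" by blast
      obtain g where g: "labf t = g" by blast
      obtain ys where xs: "post T = lml T # ys" using post_hd by blast
      have l: "t = lab T g" using lab_shape[of t] T g by simp
      have c: "g (lml T) = 1 \<and> (\<forall>j<length ys. ys!j \<in> leaves T \<longrightarrow> 1 \<le> g (ys!j) \<and> g (ys!j) \<le> Suc (cnt T j))"
        using t l DT_char[OF xs, of g] by simp
      have P: "(TL T ! (g lf - 1) \<in> internals T \<or> TL T ! (g lf - 1) = lml T) \<and> precedes T (TL T ! (g lf - 1)) lf"
        if lf: "lf \<in> leaves T" "lf \<noteq> lml T" for lf
      proof -
        obtain j where j: "j < length ys" "ys ! j = lf" using leaf_pos[OF xs lf] by blast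
        have m: "Suc (cnt T j) \<le> length (TL T)" using targets(2)[OF xs j(1)] .
        have b: "1 \<le> g lf" "g lf \<le> Suc (cnt T j)" using c j lf by auto
        have "TL T ! (g lf - 1) \<in> set (take (Suc (cnt T j)) (TL T))"
          using b m by (intro nth_in_take) auto
        then have "TL T ! (g lf - 1) \<in> {v. (v \<in> internals T \<or> v = lml T) \<and> precedes T v (post T ! Suc j)}"
          using targets(1)[OF xs j(1)] by simp
        then show ?thesis using xs j by simp
      qed
      have "isize T = n" using n dsize_shape[of t] T by simp
      then show "p \<in> relaxed_trees n"
        unfolding pt chi_def relaxed_trees_def T g using P by auto
    qed
    show "relaxed_trees n \<subseteq> chi ` {t. dsize t = n \<and> dec_ok 0 (encAll t)}"
    proof
      fix p assume p: "p \<in> relaxed_trees n"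
      obtain T f where pT: "p = (T, f)" by fastforce
      have Tn: "isize T = n" and fl: "\<And>lf. lf \<in> leaves T - {lml T} \<Longrightarrow> (f lf \<in> internals T \<or> f lf = lml T) \<and> precedes T (f lf) lf"
        and fo: "\<And>x. x \<notin> leaves T - {lml T} \<Longrightarrow> f x = []"
        using p pT by (auto simp: relaxed_trees_def)
      obtain ys where xs: "post T = lml T # ys" using post_hd by blast
      define g where "g a = (if a = lml T then 1 else Suc (SOME k. k < length (TL T) \<and> TL T ! k = f a))" for a
      have key: "1 \<le> g (ys!j) \<and> g (ys!j) \<le> Suc (cnt T j) \<and> TL T ! (g (ys!j) - 1) = f (ys!j)"
        if j: "j < length ys" "ys!j \<in> leaves T" for j
      proof -
        have ne: "ys!j \<noteq> lml T" using post_distinct[of T] xs j by (auto simp: in_set_conv_nth)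
        have m: "Suc (cnt T j) \<le> length (TL T)" using targets(2)[OF xs j(1)] .
        have "f (ys!j) \<in> {v. (v \<in> internals T \<or> v = lml T) \<and> precedes T v (post T ! Suc j)}"
          using fl[of "ys!j"] j ne xs by simp
        then have "f (ys!j) \<in> set (take (Suc (cnt T j)) (TL T))" using targets(1)[OF xs j(1)] by simp
        then obtain k where k: "k < Suc (cnt T j)" "TL T ! k = f (ys!j)"
          using m by (auto simp: in_set_conv_nth)
        have kl: "k < length (TL T)" using k m by simp
        define k' where "k' = (SOME k. k < length (TL T) \<and> TL T ! k = f (ys!j))"
        have "k' < length (TL T) \<and> TL T ! k' = f (ys!j)"
          unfolding k'_def by (rule someI[of _ k]) (use k kl in simp)
        then have "k' = k" using k kl TL_distinct[of T] by (metis nth_eq_iff_index_eq)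
        then have "g (ys!j) = Suc k" using ne by (simp add: g_def k'_def)
        then show ?thesis using k by simp
      qed
      define t where "t = lab T g"
      have "dec_ok 0 (encAll t)" unfolding t_def DT_char[OF xs] using key by (simp add: g_def)
      moreover have "dsize t = n" using Tn by (simp add: t_def)
      moreover have "chi t = p"
      proof -
        have "(if a \<in> leaves T - {lml T} then TL T ! (labf t a - 1) else []) = f a" for a
        proof (cases "a \<in> leaves T - {lml T}")
          case True
          then obtain j where j: "j < length ys" "ys ! j = a" using leaf_pos[OF xs] by blast
          have "labf t a = g a" using True labf_lab by (simp add: t_def)
          then show ?thesis using key[of j] j True by simp
        next
          case False then have "f a = []" using fo by blast
          then show ?thesis using False by auto
        qed
        moreover have sT: "shape t = T" by (simp add: t_def)
        ultimately show ?thesis unfolding chi_def pT sT by auto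
      qed
      ultimately show "p \<in> chi ` {t. dsize t = n \<and> dec_ok 0 (encAll t)}" by blast
    qed
  qed
qed

theorem theorem2p5:
  fixes n :: nat
  shows "\<exists>\<phi>. bij_betw \<phi> (relaxed_trees n) (dyck_paths n)"
proof -
  have "bij_betw ((\<lambda>t. tl (encAll t)) \<circ> the_inv_into {t. dsize t = n \<and> dec_ok 0 (encAll t)} chi)
          (relaxed_trees n) (dyck_paths n)"
    by (rule bij_betw_trans[OF bij_betw_the_inv_into[OF step1] step2])
  then show ?thesis by blast
qed

end
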